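(* Let $r\in(0,1)$, $\alpha\in(0,1)$ and let $\{m_n\}_{n\ge1}$ be an infinitely increasing sequence of natural numbers. For each $n$ let $Y_n$ be a random variable with $$Y_n\stackrel{d}{=}\frac{S_{\alpha,1}Z_{r,\mu_n}^{1/\alpha}}{1+S_{\alpha,1}Z_{r,\mu_n}^{1/\alpha}},\qquad \mu_n=m_n^{-\alpha},$$ ($S_{\alpha,1}$, $Z_{r,\mu_n}$ independent) and let $K_n$ have the $Y_n$-mixed binomial distribution with parameter $m_n$. Then, as $n\to\infty$, $\mathsf P(K_n<x)\Longrightarrow \Pi^{(S_{\alpha,1}Z_{r,1}^{1/\alpha})}(x)$, i.e. $K_n$ converges in distribution to the mixed Poisson law with structural random variable $S_{\alpha,1}Z_{r,1}^{1/\alpha}$ ($S_{\alpha,1}$, $Z_{r,1}$ independent).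
   Context: $G_{s,1}$ is a gamma random variable with density $\frac1{\Gamma(s)}x^{s-1}e^{-x}$, $x\ge0$. For $0<\alpha<1$, $S_{\alpha,1}$ has the one-sided strictly stable characteristic function $\exp\{-|t|^{\alpha}\exp(-\tfrac12 i\pi\alpha\,\mathrm{sign}\,t)\}$. For $r\in(0,1)$, $\mu>0$: $Z_{r,\mu}=\mu(G_{r,1}+G_{1-r,1})/G_{r,1}$ with independent gamma factors. For a random variable $Y$ with $\mathsf P(0<Y<1)=1$ and $m\in\mathbb N$, $K$ has the $Y$-mixed binomial distribution with parameter $m$ if $\mathsf P(K=j)=\binom{m}{j}\int_0^1z^j(1-z)^{m-j}\,d\mathsf P(Y<z)$, $j=0,\dots,m$. For a positive random variable $Z$, the mixed Poisson law with structural variable $Z$ has $\mathsf P(\,\cdot=k)=\frac1{k!}\int_0^\infty e^{-z}z^k\,d\mathsf P(Z<z)$, $k=0,1,\dots$, with distribution function denoted $\Pi^{(Z)}$. *)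

theory Defs
  imports "HOL-Probability.Probability"
begin

definition gamma_density :: "real \<Rightarrow> real \<Rightarrow> real" where
  "gamma_density s x = (if 0 \<le> x then x powr (s - 1) * exp (- x) / Gamma s else 0)"

definition gamma_measure :: "real \<Rightarrow> real measure" where
  "gamma_measure s = density lborel (\<lambda>x. ennreal (gamma_density s x))"

text \<open>One-sided strictly stable characteristic function.\<close>
definition stable_char :: "real \<Rightarrow> real \<Rightarrow> complex" where
  "stable_char \<alpha> t =
     exp (- (complex_of_real (\<bar>t\<bar> powr \<alpha>)) * exp (- (\<i> * complex_of_real (pi * \<alpha> / 2 * sgn t))))"

definition Z_measure :: "real \<Rightarrow> real \<Rightarrow> real measure" where
  "Z_measure r \<mu> = distr (gamma_measure r \<Otimes>\<^sub>M gamma_measure (1 - r)) borel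
      (\<lambda>(g1, g2). \<mu> * (g1 + g2) / g1)"

definition SZ_measure :: "real measure \<Rightarrow> real \<Rightarrow> real \<Rightarrow> real \<Rightarrow> real measure" where
  "SZ_measure S \<alpha> r \<mu> = distr (S \<Otimes>\<^sub>M Z_measure r \<mu>) borel
      (\<lambda>(s, z). s * z powr (1 / \<alpha>))"

definition mixed_binomial :: "nat \<Rightarrow> real measure \<Rightarrow> real measure" where
  "mixed_binomial m Y = distr
     (density (count_space UNIV)
        (\<lambda>j::nat. if j \<le> m then ennreal (real (m choose j) *
             (LINT z|Y. z ^ j * (1 - z) ^ (m - j))) else 0))
     borel real"

definition mixed_poisson :: "real measure \<Rightarrow> real measure" where
  "mixed_poisson Z = distr
     (density (count_space UNIV)
        (\<lambda>k::nat. ennreal ((LINT z|Z. exp (- z) * z ^ k) / fact k)))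
     borel real"

end

theory Submission
  imports Defs "HOL-Complex_Analysis.Complex_Analysis" "HOL-Real_Asymp.Real_Asymp"
begin


lemma gamma_sets[measurable_cong, simp]: "sets (gamma_measure s) = sets borel"
  by (simp add: gamma_measure_def)

lemma gamma_space[simp]: "space (gamma_measure s) = UNIV"
  by (simp add: gamma_measure_def)

lemma prob_space_gamma: assumes "0 < s" shows "prob_space (gamma_measure s)"
proof
  have G: "Gamma s > 0" using assms by (rule Gamma_real_pos)
  have "emeasure (gamma_measure s) (space (gamma_measure s)) =
        (\<integral>\<^sup>+ t. ennreal (indicator {0..} t * t powr (s - 1) / exp t) * ennreal (1 / Gamma s) \<partial>lborel)"
    unfolding gamma_measure_def
    apply (subst emeasure_density)
      apply (auto intro!: nn_integral_cong simp: gamma_density_def exp_minus field_simps indicator_def)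
    apply (subst ennreal_mult[symmetric])
      apply (auto simp: field_simps G less_imp_le[OF G])
    done
  also have "\<dots> = ennreal (Gamma s) * ennreal (1 / Gamma s)"
    by (subst nn_integral_multc) (simp_all add: Gamma_conv_nn_integral_real[OF assms])
  also have "\<dots> = 1" using G by (simp add: ennreal_mult'[symmetric])
  finally show "emeasure (gamma_measure s) (space (gamma_measure s)) = 1" .
qed



lemma Z_sets[measurable_cong, simp]: "sets (Z_measure r \<mu>) = sets borel"
  by (simp add: Z_measure_def)

lemma Z_space[simp]: "space (Z_measure r \<mu>) = UNIV"
  by (simp add: Z_measure_def)

lemma gamma_density_meas[measurable]: "gamma_density s \<in> borel_measurable borel"
  unfolding gamma_density_def by measurable

lemma pair_gamma: assumes "0 < r" "r < 1"
  shows "pair_prob_space (gamma_measure r) (gamma_measure (1 - r))"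
proof -
  have "prob_space (gamma_measure r)" "prob_space (gamma_measure (1 - r))"
    using assms by (auto intro!: prob_space_gamma)
  then show ?thesis
    by (auto simp: pair_prob_space_def pair_sigma_finite_def prob_space_imp_sigma_finite)
qed

lemma Z_prob: assumes "0 < r" "r < 1" shows "prob_space (Z_measure r \<mu>)"
proof -
  interpret P: pair_prob_space "gamma_measure r" "gamma_measure (1 - r)"
    using pair_gamma[OF assms(1,2)] .
  show ?thesis unfolding Z_measure_def
    by (rule P.prob_space_distr) measurable
qed

lemma Z_scale: "Z_measure r \<mu> = distr (Z_measure r 1) borel (\<lambda>z. \<mu> * z)"
  unfolding Z_measure_def
  by (subst distr_distr) (auto intro!: distr_cong)

lemma AE_gamma_nonneg: "AE x in gamma_measure s. 0 \<le> x"
  unfolding gamma_measure_def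
  by (subst AE_density) (auto simp: gamma_density_def)

lemma AE_Z_nonneg: assumes "0 < r" "r < 1" "0 \<le> \<mu>" shows "AE z in Z_measure r \<mu>. 0 \<le> z"
proof -
  interpret P: pair_prob_space "gamma_measure r" "gamma_measure (1 - r)"
    using pair_gamma[OF assms(1,2)] .
  have "AE x in gamma_measure r \<Otimes>\<^sub>M gamma_measure (1 - r). 0 \<le> fst x \<and> 0 \<le> snd x"
    apply (rule P.AE_pair_measure)
    subgoal by measurable
    by (auto intro!: eventually_mono[OF AE_gamma_nonneg])
  then have "AE x in gamma_measure r \<Otimes>\<^sub>M gamma_measure (1 - r). 0 \<le> \<mu> * (fst x + snd x) / fst x"
    by (rule eventually_mono) (use assms(3) in auto)
  then show ?thesis unfolding Z_measure_def
    by (subst AE_distr_iff) (auto simp: split_beta)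
qed

lemma SZ_repr:
  assumes S: "real_distribution S" and r: "0 < r" "r < 1"
  shows "SZ_measure S \<alpha> r \<mu> = distr (S \<Otimes>\<^sub>M Z_measure r 1) borel (\<lambda>(s, z). s * (\<mu> * z) powr (1 / \<alpha>))"
proof -
  interpret S: real_distribution S by fact
  interpret Z: prob_space "Z_measure r \<mu>" using Z_prob[OF r] .
  have sS: "sets S = sets borel" by simp
  have "S \<Otimes>\<^sub>M Z_measure r \<mu> = distr S borel (\<lambda>x. x) \<Otimes>\<^sub>M distr (Z_measure r 1) borel (\<lambda>z. \<mu> * z)"
    by (simp add: distr_id2[OF sS[symmetric]] Z_scale[symmetric])
  also have "\<dots> = distr (S \<Otimes>\<^sub>M Z_measure r 1) (borel \<Otimes>\<^sub>M borel) (\<lambda>(x, y). (x, \<mu> * y))"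
    by (rule pair_measure_distr) (auto simp: Z_scale[symmetric] intro: Z.sigma_finite_measure)
  finally have eq: "S \<Otimes>\<^sub>M Z_measure r \<mu> = distr (S \<Otimes>\<^sub>M Z_measure r 1) (borel \<Otimes>\<^sub>M borel) (\<lambda>(x, y). (x, \<mu> * y))" .
  show ?thesis unfolding SZ_measure_def eq
    by (subst distr_distr) (auto intro!: distr_cong simp: split_beta)
qed



lemma binom_term_bound:
  fixes p :: real assumes "0 \<le> p" "p \<le> 1"
  shows "0 \<le> real (m choose j) * p ^ j * (1 - p) ^ (m - j)"
    and "real (m choose j) * p ^ j * (1 - p) ^ (m - j) \<le> 1"
proof -
  show "0 \<le> real (m choose j) * p ^ j * (1 - p) ^ (m - j)" using assms by simp
  show "real (m choose j) * p ^ j * (1 - p) ^ (m - j) \<le> 1"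
  proof (cases "j \<le> m")
    case True
    have "real (m choose j) * p ^ j * (1 - p) ^ (m - j) \<le>
          (\<Sum>k\<le>m. real (m choose k) * p ^ k * (1 - p) ^ (m - k))"
      by (rule member_le_sum[of j "{..m}" "\<lambda>k. real (m choose k) * p ^ k * (1 - p) ^ (m - k)"])
         (use True assms in auto)
    also have "\<dots> = (p + (1 - p)) ^ m" by (rule binomial_ring[symmetric])
    finally show ?thesis by simp
  next
    case False then show ?thesis by (simp add: binomial_eq_0)
  qed
qed

lemma choose_over_pow:
  "(\<lambda>m. real (m choose j) / real m ^ j) \<longlonglongrightarrow> 1 / fact j"
proof -
  have eq: "real (m choose j) / real m ^ j = (\<Prod>i = 0..<j. (real m - real i) / real m) / fact j" for m
  proof -
    have "real (m choose j) = (\<Prod>i = 0..<j. real m - real i) / fact j"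
      using gbinomial_mult_fact[of j "real m"] by (simp add: binomial_gbinomial field_simps)
    moreover have "(\<Prod>i = 0..<j. (real m - real i) / real m) = (\<Prod>i = 0..<j. real m - real i) / real m ^ j"
      by (simp add: prod_dividef)
    ultimately show ?thesis by simp
  qed
  have "(\<lambda>m. (\<Prod>i = 0..<j. (real m - real i) / real m) / fact j) \<longlonglongrightarrow> (\<Prod>i = 0..<j. 1) / fact j"
  proof (intro tendsto_divide tendsto_prod tendsto_const)
    fix i :: nat
    show "(\<lambda>m. (real m - real i) / real m) \<longlonglongrightarrow> 1" by real_asymp
  qed simp
  then show ?thesis by (simp add: eq)
qed

lemma binom_poisson_lim:
  fixes w :: real assumes "0 \<le> w"
  shows "(\<lambda>m. real (m choose j) * ((w / real m) / (1 + w / real m)) ^ j * (1 - (w / real m) / (1 + w / real m)) ^ (m - j))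
     \<longlonglongrightarrow> exp (- w) * w ^ j / fact j"
proof -
  have ev: "eventually (\<lambda>m. real (m choose j) / real m ^ j * w ^ j / (1 + w / real m) ^ m =
      real (m choose j) * ((w / real m) / (1 + w / real m)) ^ j * (1 - (w / real m) / (1 + w / real m)) ^ (m - j)) sequentially"
    using eventually_ge_at_top[of "Suc j"]
  proof eventually_elim
    case (elim m)
    define q where "q = 1 + w / real m"
    have q: "q > 0" using assms elim by (simp add: q_def add_pos_nonneg)
    have wq: "w / real m = q - 1" by (simp add: q_def)
    have h1: "1 - (w / real m) / q = 1 / q" unfolding wq using q by (simp add: field_simps)
    have h2: "q ^ m = q ^ j * q ^ (m - j)" using elim by (simp add: power_add[symmetric])
    show ?case unfolding q_def[symmetric] h1 h2 using q
      by (simp add: power_divide field_simps)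
  qed
  have "(\<lambda>m. real (m choose j) / real m ^ j * w ^ j / (1 + w / real m) ^ m) \<longlonglongrightarrow> 1 / fact j * w ^ j / exp w"
    by (intro tendsto_intros choose_over_pow tendsto_exp_limit_sequentially) simp
  then have "(\<lambda>m. real (m choose j) * ((w / real m) / (1 + w / real m)) ^ j * (1 - (w / real m) / (1 + w / real m)) ^ (m - j))
     \<longlonglongrightarrow> 1 / fact j * w ^ j / exp w"
    by (rule Lim_transform_eventually) (rule ev)
  then show ?thesis by (simp add: exp_minus field_simps)
qed



lemma cdf_discrete:
  fixes p :: "nat \<Rightarrow> real"
  shows "cdf (distr (density (count_space UNIV) (\<lambda>j. ennreal (p j))) borel real) x =
         (\<Sum>j\<in>{j. real j \<le> x}. max (p j) 0)"
proof -
  have fin: "finite {j::nat. real j \<le> x}"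
    by (rule finite_subset[of _ "{..nat \<lceil>x\<rceil>}"]) (auto, metis ceiling_mono ceiling_of_nat nat_int nat_mono)
  have "cdf (distr (density (count_space UNIV) (\<lambda>j. ennreal (p j))) borel real) x =
        measure (density (count_space UNIV) (\<lambda>j. ennreal (p j))) {j. real j \<le> x}"
    unfolding cdf_def by (subst measure_distr) (auto simp: vimage_def)
  also have "\<dots> = enn2real (\<Sum>j\<in>{j. real j \<le> x}. ennreal (p j))"
    unfolding measure_def
    by (subst emeasure_density)
       (auto simp: nn_integral_count_space_indicator[symmetric] nn_integral_count_space_finite[OF fin])
  also have "(\<Sum>j\<in>{j. real j \<le> x}. ennreal (p j)) = (\<Sum>j\<in>{j. real j \<le> x}. ennreal (max (p j) 0))"
    by (intro sum.cong refl) (auto simp: max_def ennreal_neg)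
  also have "\<dots> = ennreal (\<Sum>j\<in>{j. real j \<le> x}. max (p j) 0)"
    by (rule sum_ennreal) auto
  also have "enn2real \<dots> = (\<Sum>j\<in>{j. real j \<le> x}. max (p j) 0)"
    by (rule enn2real_ennreal) (auto intro!: sum_nonneg)
  finally show ?thesis .
qed

lemma weak_conv_discrete:
  fixes p :: "nat \<Rightarrow> nat \<Rightarrow> real" and pl :: "nat \<Rightarrow> real"
  assumes "\<And>j. (\<lambda>n. p n j) \<longlonglongrightarrow> pl j"
  shows "weak_conv_m (\<lambda>n. distr (density (count_space UNIV) (\<lambda>j. ennreal (p n j))) borel real)
            (distr (density (count_space UNIV) (\<lambda>j. ennreal (pl j))) borel real)"
  unfolding weak_conv_m_def weak_conv_def cdf_discrete
  by (intro allI impI tendsto_sum tendsto_max assms tendsto_const)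



lemma main_from_pos:
  fixes r \<alpha> :: real and m :: "nat \<Rightarrow> nat" and S :: "real measure"
    and Y :: "nat \<Rightarrow> real measure"
  assumes r: "0 < r" "r < 1"
    and \<alpha>: "0 < \<alpha>" "\<alpha> < 1"
    and m_lim: "filterlim m at_top sequentially"
    and S_dist: "real_distribution S"
    and Spos: "AE x in S. 0 \<le> x"
    and Y_law: "\<And>n. Y n = distr (SZ_measure S \<alpha> r (real (m n) powr (- \<alpha>))) borel
                              (\<lambda>x. x / (1 + x))"
  shows "weak_conv_m (\<lambda>n. mixed_binomial (m n) (Y n)) (mixed_poisson (SZ_measure S \<alpha> r 1))"
proof -
  interpret S: real_distribution S by fact
  define Z1 where "Z1 = Z_measure r 1"
  interpret Z: prob_space Z1 unfolding Z1_def by (rule Z_prob[OF r])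
  interpret P: pair_prob_space S Z1
    by (auto simp: pair_prob_space_def pair_sigma_finite_def S.prob_space_axioms
          Z.prob_space_axioms prob_space_imp_sigma_finite)
  define F where "F = (\<lambda>\<mu>::real. \<lambda>(s::real, z::real). s * (\<mu> * z) powr (1 / \<alpha>))"
  have F_meas[measurable]: "F \<mu> \<in> borel_measurable (S \<Otimes>\<^sub>M Z1)" for \<mu>
    unfolding F_def Z1_def by measurable
  define \<mu> where "\<mu> n = real (m n) powr (- \<alpha>)" for n
  define pn where "pn n j = real (m n choose j) * (LINT z|Y n. z ^ j * (1 - z) ^ (m n - j))" for n j
  define pl where "pl j = (LINT z|SZ_measure S \<alpha> r 1. exp (- z) * z ^ j) / fact j" for j
  have SZ: "SZ_measure S \<alpha> r c = distr (S \<Otimes>\<^sub>M Z1) borel (F c)" for c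
    unfolding F_def Z1_def by (rule SZ_repr[OF S_dist r])
  have mb: "mixed_binomial (m n) (Y n) = distr (density (count_space UNIV) (\<lambda>j. ennreal (pn n j))) borel real" for n
    unfolding mixed_binomial_def pn_def
    by (intro arg_cong[where f="\<lambda>f. distr (density (count_space UNIV) f) borel real"] ext)
       (auto simp: binomial_eq_0)
  have mp: "mixed_poisson (SZ_measure S \<alpha> r 1) = distr (density (count_space UNIV) (\<lambda>j. ennreal (pl j))) borel real"
    unfolding mixed_poisson_def pl_def ..
  have AEP: "AE x in S \<Otimes>\<^sub>M Z1. 0 \<le> fst x \<and> 0 \<le> snd x"
    apply (rule P.AE_pair_measure)
    subgoal unfolding Z1_def by measurable
    using Spos AE_Z_nonneg[OF r, of 1] unfolding Z1_def by (auto elim!: eventually_mono)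
  have F_nonneg: "0 \<le> F c x" if "0 \<le> fst x" "0 \<le> snd x" "0 \<le> c" for c x
    using that by (auto simp: F_def split_beta)
  have conv: "(\<lambda>n. pn n j) \<longlonglongrightarrow> pl j" for j
  proof -
    define q where "q n x = F (\<mu> n) x / (1 + F (\<mu> n) x)" for n x
    define s where "s n x = real (m n choose j) * q n x ^ j * (1 - q n x) ^ (m n - j)" for n x
    define f where "f x = exp (- F 1 x) * F 1 x ^ j / fact j" for x
    have pn_eq: "pn n j = integral\<^sup>L (S \<Otimes>\<^sub>M Z1) (s n)" for n
    proof -
      have "Y n = distr (S \<Otimes>\<^sub>M Z1) borel (\<lambda>x. F (\<mu> n) x / (1 + F (\<mu> n) x))"
        unfolding Y_law SZ \<mu>_def[symmetric] by (subst distr_distr) (auto simp: comp_def)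
      then have "(LINT z|Y n. z ^ j * (1 - z) ^ (m n - j)) = integral\<^sup>L (S \<Otimes>\<^sub>M Z1) (\<lambda>x. q n x ^ j * (1 - q n x) ^ (m n - j))"
        by (simp add: integral_distr q_def)
      then show ?thesis unfolding pn_def s_def by (simp add: mult.assoc)
    qed
    have pl_eq: "pl j = integral\<^sup>L (S \<Otimes>\<^sub>M Z1) f"
      unfolding pl_def f_def SZ by (simp add: integral_distr)
    have "(\<lambda>n. integral\<^sup>L (S \<Otimes>\<^sub>M Z1) (s n)) \<longlonglongrightarrow> integral\<^sup>L (S \<Otimes>\<^sub>M Z1) f"
    proof (rule integral_dominated_convergence[where w="\<lambda>_. 1"])
      show "f \<in> borel_measurable (S \<Otimes>\<^sub>M Z1)" unfolding f_def by measurable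
      show "s n \<in> borel_measurable (S \<Otimes>\<^sub>M Z1)" for n unfolding s_def q_def by measurable
      show "integrable (S \<Otimes>\<^sub>M Z1) (\<lambda>_. 1::real)" by simp
      show "AE x in S \<Otimes>\<^sub>M Z1. norm (s n x) \<le> 1" for n
        using AEP
      proof eventually_elim
        case (elim x)
        have "0 \<le> \<mu> n" by (simp add: \<mu>_def)
        then have F0: "0 \<le> F (\<mu> n) x" using elim F_nonneg by auto
        have "0 \<le> q n x" "q n x \<le> 1" using F0 by (auto simp: q_def)
        from binom_term_bound[OF this, of "m n" j] show ?case by (simp add: s_def)
      qed
      show "AE x in S \<Otimes>\<^sub>M Z1. (\<lambda>n. s n x) \<longlonglongrightarrow> f x"
        using AEP
      proof eventually_elim
        case (elim x)
        note xpos = elim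
        define w where "w = F 1 x"
        have w0: "0 \<le> w" using elim F_nonneg unfolding w_def by auto
        have lim: "(\<lambda>n. real (m n choose j) * ((w / real (m n)) / (1 + w / real (m n))) ^ j *
                     (1 - (w / real (m n)) / (1 + w / real (m n))) ^ (m n - j)) \<longlonglongrightarrow> f x"
          unfolding f_def w_def[symmetric]
          using filterlim_compose[OF binom_poisson_lim[OF w0, of j] m_lim] by simp
        have ev: "eventually (\<lambda>n. 0 < m n) sequentially"
          by (rule eventually_mono[OF m_lim[unfolded filterlim_at_top, rule_format, of 1]]) simp
        show ?case
        proof (rule Lim_transform_eventually[OF lim])
          show "\<forall>\<^sub>F n in sequentially. real (m n choose j) * ((w / real (m n)) / (1 + w / real (m n))) ^ j *
                     (1 - (w / real (m n)) / (1 + w / real (m n))) ^ (m n - j) = s n x"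
            using ev
          proof eventually_elim
            case (elim n)
            have mpos: "0 < real (m n)" using elim by simp
            have "\<mu> n powr (1 / \<alpha>) = real (m n) powr (- \<alpha> * (1 / \<alpha>))"
              unfolding \<mu>_def by (simp add: powr_powr)
            also have "\<dots> = 1 / real (m n)" using \<alpha> mpos by (simp add: powr_minus_divide)
            finally have mu: "\<mu> n powr (1 / \<alpha>) = 1 / real (m n)" .
            have "F (\<mu> n) x = w / real (m n)"
              using xpos mu unfolding w_def F_def
              by (auto simp: split_beta powr_mult \<mu>_def)
            then show ?case by (simp add: s_def q_def)
          qed
        qed
      qed
    qed
    then show ?thesis unfolding pn_eq pl_eq .
  qed
  show ?thesis unfolding mb mp by (rule weak_conv_discrete[OF conv])
qed



definition psi :: "real \<Rightarrow> complex \<Rightarrow> complex" where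
  "psi \<alpha> z = exp (- ((- \<i> * z) powr (complex_of_real \<alpha>)))"

lemma psi_real: "psi \<alpha> (complex_of_real t) = stable_char \<alpha> t"
proof (cases "t = 0")
  case True then show ?thesis by (simp add: psi_def stable_char_def)
next
  case False
  show ?thesis
  proof (cases "t > 0")
    case True
    have "(- \<i> * complex_of_real t) powr complex_of_real \<alpha> = (complex_of_real t * (- \<i>)) powr complex_of_real \<alpha>"
      by (simp add: mult.commute)
    also have "\<dots> = complex_of_real t powr complex_of_real \<alpha> * (- \<i>) powr complex_of_real \<alpha>"
      using True by (intro powr_times_real_left) auto
    also have "(- \<i>) powr complex_of_real \<alpha> = exp (- (\<i> * complex_of_real (pi * \<alpha> / 2)))"
      by (simp add: powr_def Ln_minus_ii field_simps)
    finally show ?thesis using True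
      by (simp add: psi_def stable_char_def powr_of_real)
  next
    case False
    with \<open>t \<noteq> 0\<close> have tn: "t < 0" by simp
    have "(- \<i> * complex_of_real t) powr complex_of_real \<alpha> = (complex_of_real (- t) * \<i>) powr complex_of_real \<alpha>"
      by (simp add: mult.commute)
    also have "\<dots> = complex_of_real (- t) powr complex_of_real \<alpha> * \<i> powr complex_of_real \<alpha>"
      using tn by (intro powr_times_real_left) auto
    also have "\<i> powr complex_of_real \<alpha> = exp (- (\<i> * complex_of_real (pi * \<alpha> / 2 * sgn t)))"
      using tn by (simp add: powr_def Ln_ii field_simps)
    finally have e: "(- \<i> * complex_of_real t) powr complex_of_real \<alpha> = complex_of_real (- t) powr complex_of_real \<alpha> * exp (- (\<i> * complex_of_real (pi * \<alpha> / 2 * sgn t)))" .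
    have p: "complex_of_real (- t) powr complex_of_real \<alpha> = complex_of_real ((-t) powr \<alpha>)"
      using powr_of_real[of "-t" \<alpha>] tn by simp
    show ?thesis using tn unfolding psi_def stable_char_def e p by simp
  qed
qed

lemma norm_psi_le:
  assumes "0 \<le> Im z" "0 \<le> \<alpha>" "\<alpha> \<le> 1"
  shows "cmod (psi \<alpha> z) \<le> 1"
proof (cases "z = 0")
  case True then show ?thesis by (simp add: psi_def)
next
  case False
  define w where "w = - \<i> * z"
  have w0: "w \<noteq> 0" using False by (simp add: w_def)
  have "0 \<le> Re w" using assms by (simp add: w_def)
  then have L: "\<bar>Im (Ln w)\<bar> \<le> pi / 2" using Re_Ln_pos_le[OF w0] by simp
  have "\<bar>\<alpha> * Im (Ln w)\<bar> \<le> 1 * (pi / 2)"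
    unfolding abs_mult using assms L by (intro mult_mono) auto
  then have "0 \<le> cos (\<alpha> * Im (Ln w))" by (intro cos_ge_zero) auto
  then have "0 \<le> Re (w powr complex_of_real \<alpha>)"
    using w0 by (simp add: powr_def Re_exp)
  then show ?thesis unfolding psi_def w_def[symmetric] by (simp add: norm_exp_eq_Re)
qed



definition H :: "complex set" where "H = {z. 0 \<le> Im z}"

lemma interior_H: "interior H = {z. 0 < Im z}"
proof -
  have e: "H = {z. \<i> \<bullet> z \<ge> 0}" by (simp add: H_def inner_complex_def)
  have "interior H = {z. \<i> \<bullet> z > 0}" unfolding e by (rule interior_halfspace_ge) simp
  then show ?thesis by (simp add: inner_complex_def)
qed

lemma convex_H: "convex H"
proof -
  have e: "H = {z. \<i> \<bullet> z \<ge> 0}" by (simp add: H_def inner_complex_def)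
  show ?thesis unfolding e by (rule convex_halfspace_ge)
qed

lemma psi_deriv:
  assumes "z \<noteq> 0" "0 \<le> Im z"
  shows "psi \<alpha> field_differentiable at z"
proof -
  have nz: "- \<i> * z \<notin> \<real>\<^sub>\<le>\<^sub>0"
  proof
    assume "- \<i> * z \<in> \<real>\<^sub>\<le>\<^sub>0"
    then obtain r where "- \<i> * z = complex_of_real r" "r \<le> 0" by (auto simp: nonpos_Reals_def)
    then have "Re z = 0" "Im z \<le> 0" by (auto simp: complex_eq_iff)
    then show False using assms by (auto simp: complex_eq_iff)
  qed
  have d0: "((\<lambda>z. - \<i> * z) has_field_derivative - \<i>) (at z)"
    by (auto intro!: derivative_eq_intros)
  have d1: "((\<lambda>z. (- \<i> * z) powr complex_of_real \<alpha>) has_field_derivative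
      (complex_of_real \<alpha> * (- \<i> * z) powr (complex_of_real \<alpha> - 1)) * (- \<i>)) (at z)"
    using DERIV_chain2[where f="\<lambda>w. w powr complex_of_real \<alpha>" and g="\<lambda>z. - \<i> * z",
        OF has_field_derivative_powr[OF nz] d0] .
  have d2: "((\<lambda>z. - ((- \<i> * z) powr complex_of_real \<alpha>)) has_field_derivative
      - ((complex_of_real \<alpha> * (- \<i> * z) powr (complex_of_real \<alpha> - 1)) * (- \<i>))) (at z)"
    using d1 by (rule DERIV_minus)
  have "((\<lambda>z. exp (- ((- \<i> * z) powr complex_of_real \<alpha>))) has_field_derivative
      exp (- ((- \<i> * z) powr complex_of_real \<alpha>)) * - ((complex_of_real \<alpha> * (- \<i> * z) powr (complex_of_real \<alpha> - 1)) * (- \<i>))) (at z)"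
    using DERIV_chain2[where f=exp, OF DERIV_exp d2] .
  then show ?thesis unfolding psi_def field_differentiable_def by blast
qed

lemma psi_cont_0: "isCont (psi \<alpha>) 0" if "0 < \<alpha>"
proof -
  have "((\<lambda>z. (- \<i> * z) powr complex_of_real \<alpha>) \<longlongrightarrow> 0) (at 0)"
  proof (rule tendsto_norm_zero_cancel)
    have "((\<lambda>z. cmod z powr \<alpha>) \<longlongrightarrow> 0) (at (0::complex))"
      using that by (intro tendsto_zero_powrI tendsto_norm_zero tendsto_ident_at) auto
    then show "((\<lambda>z. cmod ((- \<i> * z) powr complex_of_real \<alpha>)) \<longlongrightarrow> 0) (at 0)"
      by (simp add: norm_powr_real_powr' norm_mult)
  qed
  then have "(psi \<alpha> \<longlongrightarrow> exp (- 0)) (at 0)"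
    unfolding psi_def by (intro tendsto_intros)
  then show ?thesis by (simp add: isCont_def psi_def)
qed

lemma psi_cont: "0 < \<alpha> \<Longrightarrow> continuous_on H (psi \<alpha>)"
proof (intro continuous_at_imp_continuous_on ballI)
  fix z assume "0 < \<alpha>" "z \<in> H"
  then show "isCont (psi \<alpha>) z"
    by (cases "z = 0") (auto simp: psi_cont_0 H_def intro!: field_differentiable_imp_continuous_at psi_deriv)
qed



definition hf :: "real \<Rightarrow> real \<Rightarrow> complex \<Rightarrow> complex" where
  "hf a b z = (if z = 0 then complex_of_real (b - a) else
     (exp (\<i> * (- (z * complex_of_real a))) - exp (\<i> * (- (z * complex_of_real b)))) / (\<i> * z))"

lemma hf_holo: "hf a b holomorphic_on (- {0})"
proof -
  have "(\<lambda>z. (exp (\<i> * (- (z * complex_of_real a))) - exp (\<i> * (- (z * complex_of_real b)))) / (\<i> * z))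
        holomorphic_on (- {0})"
    by (intro holomorphic_intros) auto
  then show ?thesis by (rule holomorphic_cong[THEN iffD1, rotated 2]) (auto simp: hf_def)
qed

lemma hf_deriv: "z \<noteq> 0 \<Longrightarrow> hf a b field_differentiable at z"
  by (rule holomorphic_on_imp_differentiable_at[OF hf_holo]) auto

lemma hf_cont0: "isCont (hf a b) 0"
proof -
  define E where "E y = exp (\<i> * (- (y * complex_of_real a))) - exp (\<i> * (- (y * complex_of_real b)))" for y
  have "(E has_field_derivative (exp (\<i> * (- (0 * complex_of_real a))) * (\<i> * (- complex_of_real a)) -
           exp (\<i> * (- (0 * complex_of_real b))) * (\<i> * (- complex_of_real b)))) (at 0)"
    unfolding E_def by (auto intro!: derivative_eq_intros)
  then have "((\<lambda>y. (E y - E 0) / (y - 0)) \<longlongrightarrow> \<i> * complex_of_real (b - a)) (at 0)"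
    unfolding has_field_derivative_iff by (simp add: algebra_simps)
  then have L1: "((\<lambda>y. (E y - E 0) / (y - 0) / \<i>) \<longlongrightarrow> \<i> * complex_of_real (b - a) / \<i>) (at 0)"
    by (intro tendsto_intros) auto
  have E0: "E 0 = 0" by (simp add: E_def)
  have eqf: "(\<lambda>y. (E y - E 0) / (y - 0) / \<i>) = (\<lambda>y. E y / (\<i> * y))"
    by (rule ext) (simp only: E0 diff_zero divide_divide_eq_left mult.commute)
  have lim: "((\<lambda>y. E y / (\<i> * y)) \<longlongrightarrow> complex_of_real (b - a)) (at 0)"
    using L1 unfolding eqf by simp
  have "((hf a b) \<longlongrightarrow> complex_of_real (b - a)) (at 0)"
    by (rule tendsto_cong[THEN iffD1, OF _ lim])
       (auto simp: eventually_at_filter hf_def E_def)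
  then show ?thesis by (simp add: isCont_def hf_def)
qed

lemma hf_cont: "isCont (hf a b) z"
  by (cases "z = 0") (auto simp: hf_cont0 intro!: field_differentiable_imp_continuous_at hf_deriv)

lemma hf_bound:
  assumes "z \<noteq> 0"
  shows "cmod (hf a b z) \<le> (exp (a * Im z) + exp (b * Im z)) / cmod z"
proof -
  have "cmod (hf a b z) = cmod (exp (\<i> * (- (z * complex_of_real a))) - exp (\<i> * (- (z * complex_of_real b)))) / cmod z"
    using assms by (simp add: hf_def norm_divide norm_mult)
  also have "\<dots> \<le> (cmod (exp (\<i> * (- (z * complex_of_real a)))) + cmod (exp (\<i> * (- (z * complex_of_real b))))) / cmod z"
    by (intro divide_right_mono norm_triangle_ineq4) simp
  also have "\<dots> = (exp (a * Im z) + exp (b * Im z)) / cmod z"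
    by (simp add: norm_exp_eq_Re mult.commute)
  finally show ?thesis .
qed

lemma hf_real: "t \<noteq> 0 \<Longrightarrow> hf a b (complex_of_real t) = (iexp (- (t * a)) - iexp (- (t * b))) / (\<i> * complex_of_real t)"
  by (simp add: hf_def)

definition GG :: "real \<Rightarrow> real \<Rightarrow> real \<Rightarrow> complex \<Rightarrow> complex" where
  "GG \<alpha> a b z = hf a b z * psi \<alpha> z"

lemma GG_cont: "0 < \<alpha> \<Longrightarrow> continuous_on H (GG \<alpha> a b)"
  unfolding GG_def
  by (intro continuous_on_mult psi_cont continuous_at_imp_continuous_on ballI hf_cont)

lemma GG_deriv: "0 < Im z \<Longrightarrow> GG \<alpha> a b field_differentiable at z"
  unfolding GG_def
  by (intro field_differentiable_mult hf_deriv psi_deriv) auto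

lemma GG_bound:
  assumes "z \<noteq> 0" "0 \<le> Im z" "0 \<le> \<alpha>" "\<alpha> \<le> 1"
  shows "cmod (GG \<alpha> a b z) \<le> (exp (a * Im z) + exp (b * Im z)) / cmod z"
proof -
  have "cmod (GG \<alpha> a b z) = cmod (hf a b z) * cmod (psi \<alpha> z)" by (simp add: GG_def norm_mult)
  also have "\<dots> \<le> (exp (a * Im z) + exp (b * Im z)) / cmod z * 1"
    by (intro mult_mono hf_bound norm_psi_le assms) (auto intro: add_nonneg_nonneg)
  finally show ?thesis by simp
qed



lemma seg_param:
  assumes "x \<in> closed_segment a b"
  obtains u where "0 \<le> u" "u \<le> 1" "Re x = (1 - u) * Re a + u * Re b" "Im x = (1 - u) * Im a + u * Im b"
  using assms unfolding closed_segment_def by (auto simp: scaleR_conv_of_real)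

lemma rect_bound:
  fixes T Y a b \<alpha> :: real
  assumes T: "0 < T" and Y: "0 < Y" and ab: "a < b" "b < 0" and al: "0 < \<alpha>" "\<alpha> < 1"
  shows "cmod (integral {-T..T} (\<lambda>t. GG \<alpha> a b (complex_of_real t))) \<le> 4 * Y / T + 4 * T * exp (b * Y) / Y"
proof -
  let ?f = "GG \<alpha> a b"
  define A where "A = complex_of_real (- T)"
  define B where "B = complex_of_real T"
  define C where "C = complex_of_real T + \<i> * complex_of_real Y"
  define D where "D = complex_of_real (- T) + \<i> * complex_of_real Y"
  have inH: "A \<in> H" "B \<in> H" "C \<in> H" "D \<in> H" using Y by (auto simp: H_def A_def B_def C_def D_def)
  have segH: "closed_segment p q \<subseteq> H" if "p \<in> H" "q \<in> H" for p q
    by (rule closed_segment_subset[OF that convex_H])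
  have cont: "continuous_on H ?f" using al(1) by (rule GG_cont)
  have ci: "?f contour_integrable_on linepath p q" if "p \<in> H" "q \<in> H" for p q
    by (rule contour_integrable_continuous_linepath, rule continuous_on_subset[OF cont segH[OF that]])
  define I1 where "I1 = contour_integral (linepath A B) ?f"
  define I2 where "I2 = contour_integral (linepath B C) ?f"
  define I3 where "I3 = contour_integral (linepath C D) ?f"
  define I4 where "I4 = contour_integral (linepath D A) ?f"
  have h1: "(?f has_contour_integral I1) (linepath A B)" unfolding I1_def
    using ci inH by (auto intro!: has_contour_integral_integral)
  have h2: "(?f has_contour_integral I2) (linepath B C)" unfolding I2_def
    using ci inH by (auto intro!: has_contour_integral_integral)
  have h3: "(?f has_contour_integral I3) (linepath C D)" unfolding I3_def
    using ci inH by (auto intro!: has_contour_integral_integral)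
  have h4: "(?f has_contour_integral I4) (linepath D A)" unfolding I4_def
    using ci inH by (auto intro!: has_contour_integral_integral)
  define g where "g = linepath A B +++ linepath B C +++ linepath C D +++ linepath D A"
  have "(?f has_contour_integral (I1 + (I2 + (I3 + I4)))) g"
    unfolding g_def
    by (intro has_contour_integral_join h1 h2 h3 h4 valid_path_join valid_path_linepath) auto
  moreover have "(?f has_contour_integral 0) g"
  proof (rule Cauchy_theorem_convex[OF cont convex_H, of "{}"])
    show "\<And>x. x \<in> interior H - {} \<Longrightarrow> ?f field_differentiable at x"
      by (auto simp: interior_H intro!: GG_deriv)
    show "valid_path g" unfolding g_def by (intro valid_path_join valid_path_linepath) auto
    show "path_image g \<subseteq> H" unfolding g_def
      using segH inH by (auto simp: path_image_join)
    show "pathfinish g = pathstart g" by (simp add: g_def)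
  qed auto
  ultimately have sum0: "I1 + (I2 + (I3 + I4)) = 0" by (rule has_contour_integral_unique)
  have side: "cmod (?f x) \<le> 2 / T" if "\<bar>Re x\<bar> = T" "0 \<le> Im x" for x
  proof -
    have x0: "x \<noteq> 0" using that T by auto
    have "cmod (?f x) \<le> (exp (a * Im x) + exp (b * Im x)) / cmod x"
      using al that x0 by (intro GG_bound) auto
    also have "\<dots> \<le> 2 / T"
    proof (rule frac_le)
      have "exp (a * Im x) \<le> 1" "exp (b * Im x) \<le> 1"
        using ab that by (auto simp: mult_nonpos_nonneg)
      then show "exp (a * Im x) + exp (b * Im x) \<le> 2" by linarith
      show "T \<le> cmod x" using abs_Re_le_cmod[of x] that by simp
    qed (use T in auto)
    finally show ?thesis .
  qed
  have top: "cmod (?f x) \<le> 2 * exp (b * Y) / Y" if "Im x = Y" for x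
  proof -
    have x0: "x \<noteq> 0" using that Y by auto
    have "cmod (?f x) \<le> (exp (a * Im x) + exp (b * Im x)) / cmod x"
      using al that x0 Y by (intro GG_bound) auto
    also have "\<dots> \<le> 2 * exp (b * Y) / Y"
    proof (rule frac_le)
      have "exp (a * Y) \<le> exp (b * Y)" using ab Y by (auto intro: mult_right_mono)
      then show "exp (a * Im x) + exp (b * Im x) \<le> 2 * exp (b * Y)" using that by simp
      show "Y \<le> cmod x" using abs_Im_le_cmod[of x] that by simp
    qed (use Y in auto)
    finally show ?thesis .
  qed
  have b2: "cmod I2 \<le> 2 / T * cmod (C - B)"
  proof (rule has_contour_integral_bound_linepath[OF h2])
    fix x assume "x \<in> closed_segment B C"
    then obtain u where u: "0 \<le> u" "u \<le> 1" "Re x = (1 - u) * Re B + u * Re C" "Im x = (1 - u) * Im B + u * Im C"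
      by (rule seg_param)
    then show "cmod (?f x) \<le> 2 / T" using T Y by (intro side) (auto simp: B_def C_def algebra_simps)
  qed (use T in auto)
  have b4: "cmod I4 \<le> 2 / T * cmod (A - D)"
  proof (rule has_contour_integral_bound_linepath[OF h4])
    fix x assume "x \<in> closed_segment D A"
    then obtain u where u: "0 \<le> u" "u \<le> 1" "Re x = (1 - u) * Re D + u * Re A" "Im x = (1 - u) * Im D + u * Im A"
      by (rule seg_param)
    have i1: "Im x = (1 - u) * Y" using u(4) by (simp add: A_def D_def)
    have i2: "0 \<le> (1 - u) * Y" using u(2) Y by simp
    have r1: "Re x = - T" using u(3) by (simp add: A_def D_def algebra_simps)
    show "cmod (?f x) \<le> 2 / T" by (rule side) (use i1 i2 r1 T in auto)
  qed (use T in auto)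
  have b3: "cmod I3 \<le> 2 * exp (b * Y) / Y * cmod (D - C)"
  proof (rule has_contour_integral_bound_linepath[OF h3])
    fix x assume "x \<in> closed_segment C D"
    then obtain u where u: "0 \<le> u" "u \<le> 1" "Re x = (1 - u) * Re C + u * Re D" "Im x = (1 - u) * Im C + u * Im D"
      by (rule seg_param)
    then show "cmod (?f x) \<le> 2 * exp (b * Y) / Y" by (intro top) (auto simp: C_def D_def algebra_simps)
  qed (use Y in auto)
  have CB: "cmod (C - B) = Y" "cmod (A - D) = Y" "cmod (D - C) = 2 * T"
    using T Y by (auto simp: A_def B_def C_def D_def norm_mult)
  have "I1 = integral {-T..T} (\<lambda>t. ?f (complex_of_real t))"
  proof -
    have "((\<lambda>t. ?f (complex_of_real t)) has_integral I1) {Re A..Re B}"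
      using h1 T by (subst has_contour_integral_linepath_Reals_iff[symmetric]) (auto simp: A_def B_def)
    then show ?thesis by (simp add: A_def B_def integral_unique)
  qed
  moreover have "cmod I1 \<le> cmod I2 + cmod I3 + cmod I4"
  proof -
    have "I1 = - (I2 + I3 + I4)" using sum0 by (simp add: algebra_simps eq_neg_iff_add_eq_0)
    then have "cmod I1 = cmod (- (I2 + I3 + I4))" by (simp only:)
    then have "cmod I1 = cmod (I2 + I3 + I4)" by (simp only: norm_minus_cancel)
    also have "\<dots> \<le> cmod I2 + cmod I3 + cmod I4" by (rule order_trans[OF norm_triangle_ineq]) (simp add: norm_triangle_ineq)
    finally show ?thesis .
  qed
  moreover have "cmod I2 + cmod I3 + cmod I4 \<le> 4 * Y / T + 4 * T * exp (b * Y) / Y"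
  proof -
    have e: "4 * Y / T + 4 * T * exp (b * Y) / Y = 2 / T * Y + 2 * exp (b * Y) / Y * (2 * T) + 2 / T * Y"
      using T Y by (simp add: field_simps)
    show ?thesis using b2[unfolded CB(1)] b3[unfolded CB(3)] b4[unfolded CB(2)] e by linarith
  qed
  ultimately show ?thesis by simp
qed



lemma clbint_eq:
  fixes S :: "real measure"
  assumes S_char: "\<And>t. char S t = stable_char \<alpha> t" and al: "0 < \<alpha>" and n: "0 < n"
  shows "interval_lebesgue_integral lborel (ereal (- real n)) (ereal (real n))
           (\<lambda>t. (iexp (- (t * a)) - iexp (- (t * b))) / (\<i> * complex_of_real t) * char S t)
         = integral {- real n..real n} (\<lambda>t. GG \<alpha> a b (complex_of_real t))"
proof -
  have cont: "continuous_on {- real n..real n} (\<lambda>t. GG \<alpha> a b (complex_of_real t))"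
    by (rule continuous_on_compose2[OF GG_cont[OF al] continuous_on_of_real]) (auto simp: H_def)
  have si: "set_integrable lborel {- real n..real n} (\<lambda>t. GG \<alpha> a b (complex_of_real t))"
    by (rule borel_integrable_atLeastAtMost'[OF cont])
  have "interval_lebesgue_integral lborel (ereal (- real n)) (ereal (real n))
           (\<lambda>t. (iexp (- (t * a)) - iexp (- (t * b))) / (\<i> * complex_of_real t) * char S t)
      = (LINT t|lborel. indicator {x. - real n < x \<and> x < real n} t *\<^sub>R ((iexp (- (t * a)) - iexp (- (t * b))) / (\<i> * complex_of_real t) * char S t))"
    using n by (simp add: interval_lebesgue_integral_def set_lebesgue_integral_def einterval_def)
  also have "\<dots> = (LINT t|lborel. indicator {- real n..real n} t *\<^sub>R GG \<alpha> a b (complex_of_real t))"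
  proof (rule integral_discrete_difference[where X="{0, - real n, real n}"])
    fix x :: real assume "x \<notin> {0, - real n, real n}"
    then show "indicator {x. - real n < x \<and> x < real n} x *\<^sub>R ((iexp (- (x * a)) - iexp (- (x * b))) / (\<i> * complex_of_real x) * char S x) =
          indicator {- real n..real n} x *\<^sub>R GG \<alpha> a b (complex_of_real x)"
      by (auto simp: indicator_def GG_def hf_real psi_real S_char)
  qed auto
  also have "\<dots> = set_lebesgue_integral lborel {- real n..real n} (\<lambda>t. GG \<alpha> a b (complex_of_real t))"
    by (simp add: set_lebesgue_integral_def)
  also have "\<dots> = integral {- real n..real n} (\<lambda>t. GG \<alpha> a b (complex_of_real t))"
    by (rule set_borel_integral_eq_integral(2)[OF si])
  finally show ?thesis .
qed

lemma levy_zero: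
  fixes S :: "real measure"
  assumes S: "real_distribution S" and S_char: "\<And>t. char S t = stable_char \<alpha> t"
    and al: "0 < \<alpha>" "\<alpha> < 1" and ab: "a < b" "b < 0"
    and na: "measure S {a} = 0" and nb: "measure S {b} = 0"
  shows "measure S {a<..b} = 0"
proof -
  interpret S: real_distribution S by fact
  have L: "(\<lambda>T::nat. complex_of_real (1 / (2 * pi)) *
        (CLBINT t=ereal (real_of_int (- int T))..ereal (real T). (iexp (- (t * a)) - iexp (- (t * b))) / (\<i> * complex_of_real t) * char S t))
      \<longlonglongrightarrow> complex_of_real (measure S {a<..b})"
    using S.Levy_Inversion[of a b] ab na nb by simp
  define bd where "bd n = 4 * sqrt (real n) / real n + 4 * real n * exp (b * sqrt (real n)) / sqrt (real n)" for n :: nat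
  have bd0: "bd \<longlonglongrightarrow> 0" unfolding bd_def using ab by real_asymp
  have "(\<lambda>T::nat. complex_of_real (1 / (2 * pi)) *
        (CLBINT t=ereal (real_of_int (- int T))..ereal (real T). (iexp (- (t * a)) - iexp (- (t * b))) / (\<i> * complex_of_real t) * char S t))
      \<longlonglongrightarrow> 0"
  proof (rule Lim_null_comparison)
    show "(\<lambda>n. 1 / (2 * pi) * bd n) \<longlonglongrightarrow> 0" using tendsto_mult[OF tendsto_const bd0, of "1 / (2 * pi)"] by simp
    show "\<forall>\<^sub>F n in sequentially. cmod (complex_of_real (1 / (2 * pi)) *
        (CLBINT t=ereal (real_of_int (- int n))..ereal (real n). (iexp (- (t * a)) - iexp (- (t * b))) / (\<i> * complex_of_real t) * char S t))
        \<le> 1 / (2 * pi) * bd n"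
      using eventually_ge_at_top[of "1::nat"]
    proof eventually_elim
      case (elim n)
      then have n: "0 < n" by simp
      have "cmod (integral {- real n..real n} (\<lambda>t. GG \<alpha> a b (complex_of_real t))) \<le> bd n"
        unfolding bd_def using rect_bound[of "real n" "sqrt (real n)" a b \<alpha>] n ab al by simp
      then show ?case using clbint_eq[OF S_char al(1) n, of a b]
        by (simp add: norm_divide norm_mult divide_right_mono)
    qed
  qed
  from LIMSEQ_unique[OF L this] show ?thesis by simp
qed



lemma nonatom_exists:
  assumes "finite_measure S" "c < (d::real)"
  shows "\<exists>x\<in>{c<..<d}. measure S {x} = 0"
proof (rule ccontr)
  assume "\<not> ?thesis"
  then have "{c<..<d} \<subseteq> {x. measure S {x} \<noteq> 0}" by auto
  then have "countable {c<..<d}"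
    using countable_subset finite_measure.countable_support[OF assms(1)] by blast
  then show False using uncountable_open_interval[of c d] assms(2) by simp
qed

lemma stable_nonneg:
  fixes S :: "real measure"
  assumes S: "real_distribution S" and S_char: "\<And>t. char S t = stable_char \<alpha> t"
    and al: "0 < \<alpha>" "\<alpha> < 1"
  shows "AE x in S. 0 \<le> x"
proof -
  interpret S: real_distribution S by fact
  have fm: "finite_measure S" by (rule S.finite_measure_axioms)
  have cdf0: "cdf S b = 0" if b: "b < 0" "measure S {b} = 0" for b
  proof -
    have "\<forall>k::nat. \<exists>a\<in>{min b (- real k) - 2<..<min b (- real k) - 1}. measure S {a} = 0"
      using nonatom_exists[OF fm] by simp
    then obtain a where a: "\<And>k. a k \<in> {min b (- real k) - 2<..<min b (- real k) - 1}"
      "\<And>k. measure S {a k} = 0"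
      by metis
    have eq: "cdf S b = cdf S (a k)" for k
    proof -
      have "a k < b" using a(1)[of k] by auto
      then have "cdf S b - cdf S (a k) = measure S {a k<..b}" by (rule S.cdf_diff_eq)
      also have "\<dots> = 0"
        using levy_zero[OF S S_char al \<open>a k < b\<close> b(1) a(2) b(2)] .
      finally show ?thesis by simp
    qed
    have "filterlim a at_bot sequentially"
    proof (rule filterlim_at_bot_mono[OF filterlim_compose[OF filterlim_uminus_at_bot_at_top filterlim_real_sequentially]])
      have "a k \<le> - real k" for k using a(1)[of k] by (simp add: min_def split: if_splits)
      then show "\<forall>\<^sub>F k in sequentially. a k \<le> - real k" by simp
    qed
    then have "(\<lambda>k. cdf S (a k)) \<longlonglongrightarrow> 0"
      using filterlim_compose[OF S.cdf_lim_at_bot] by blast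
    then have "(\<lambda>k. cdf S b) \<longlonglongrightarrow> 0" by (simp only: eq[symmetric])
    then show ?thesis by (simp add: LIMSEQ_const_iff)
  qed
  have "\<forall>k::nat. \<exists>c\<in>{- 1 / (real k + 1)<..<0}. measure S {c} = 0"
    using nonatom_exists[OF fm] by simp
  then obtain c where c: "\<And>k. c k \<in> {- 1 / (real k + 1)<..<0}" "\<And>k. measure S {c k} = 0"
    by metis
  have "AE x in S. c k < x" for k
  proof -
    have "measure S {..c k} = 0" using cdf0[of "c k"] c[of k] by (simp add: cdf_def)
    then have "{x \<in> space S. \<not> c k < x} \<in> null_sets S"
      by (auto simp: null_sets_def S.emeasure_eq_measure not_less atMost_def)
    then show ?thesis by (simp add: AE_iff_null_sets)
  qed
  then have "AE x in S. \<forall>k. c k < x" by (simp add: AE_all_countable)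
  then show ?thesis
  proof (rule eventually_mono)
    fix x assume ck: "\<forall>k. c k < x"
    show "0 \<le> x"
    proof (rule ccontr)
      assume "\<not> 0 \<le> x"
      then have x: "x < 0" by simp
      obtain k :: nat where k0: "1 / (- x) < real k"
        using reals_Archimedean2[of "1 / (- x)"] by blast
      then have "1 / (- x) < real k + 1" by linarith
      then have "1 / (real k + 1) < - x" using x by (simp add: field_simps)
      then have "x < - 1 / (real k + 1)" by simp
      also have "\<dots> < c k" using c(1)[of k] by simp
      finally show False using ck by (auto dest: spec[of _ k])
    qed
  qed
qed


theorem corollary3:
  fixes r \<alpha> :: real and m :: "nat \<Rightarrow> nat" and S :: "real measure"
    and Y :: "nat \<Rightarrow> real measure"
  assumes r: "0 < r" "r < 1"
    and \<alpha>: "0 < \<alpha>" "\<alpha> < 1"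
    and m_mono: "mono m" and m_lim: "filterlim m at_top sequentially"
    and S_dist: "real_distribution S"
    and S_char: "\<And>t. char S t = stable_char \<alpha> t"
    and Y_law: "\<And>n. Y n = distr (SZ_measure S \<alpha> r (real (m n) powr (- \<alpha>))) borel
                              (\<lambda>x. x / (1 + x))"
  shows "weak_conv_m (\<lambda>n. mixed_binomial (m n) (Y n)) (mixed_poisson (SZ_measure S \<alpha> r 1))"
  by (rule main_from_pos[OF r \<alpha> m_lim S_dist stable_nonneg[OF S_dist S_char \<alpha>] Y_law])

end
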